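(* Let $q$ be a power of an odd prime with $q\equiv1\pmod4$, let $k\ge3$ be a divisor of $q-1$ with $(q-1)/k$ even, and let $B$ be the subgroup of order $k$ of $\mathbb{F}_q^\times$. Then $(q,k)$ gives a $3$-design if and only if $$\sum_{\{x,y,z\}\in\binom{B}{3}}\chi\big((x-y)(y-z)(z-x)\big)=0,$$ where $\binom{B}{3}$ denotes the set of $3$-element subsets of $B$.
   Context: The group $\mathrm{PSL}(2,q)$ acts on $\mathrm{PG}(1,q)=\mathbb{F}_q\cup\{\infty\}$ by linear fractional transformations $z\mapsto (az+b)/(cz+d)$ with $ad-bc$ a nonzero square in $\mathbb{F}_q$. "$(q,k)$ gives a $3$-design" means that the $\mathrm{PSL}(2,q)$-orbit of $B$ is the block set of a $3$-$(q+1,k,\lambda)$ design for some positive integer $\lambda$. $\chi$ is the quadratic residue character: $\chi(a)=1$ if $a$ is a nonzero square in $\mathbb{F}_q$, $\chi(a)=-1$ otherwise (the summand is well defined since $\chi(-1)=1$). *)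

theory Defs
  imports Main
begin

definition qchi :: "'a::field \<Rightarrow> int" where
  "qchi x = (if x = 0 then 0 else if (\<exists>y. y ^ 2 = x) then 1 else -1)"

text \<open>The projective line PG(1,q): None is the point at infinity.\<close>
type_synonym 'a pg1 = "'a option"

definition lft :: "'a::field \<Rightarrow> 'a \<Rightarrow> 'a \<Rightarrow> 'a \<Rightarrow> 'a option \<Rightarrow> 'a option" where
  "lft a b c d p = (case p of
      None \<Rightarrow> (if c = 0 then None else Some (a / c))
    | Some z \<Rightarrow> (if c * z + d = 0 then None else Some ((a * z + b) / (c * z + d))))"

definition psl_maps :: "('a::field option \<Rightarrow> 'a option) set" where
  "psl_maps = {lft a b c d | a b c d. \<exists>e. e \<noteq> 0 \<and> a * d - b * c = e ^ 2}"

definition psl_orbit :: "'a::field option set \<Rightarrow> 'a option set set" where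
  "psl_orbit S = {g ` S | g. g \<in> psl_maps}"

definition is_3design :: "'p set \<Rightarrow> nat \<Rightarrow> 'p set set \<Rightarrow> bool" where
  "is_3design X k blocks \<longleftrightarrow> finite X \<and> (\<forall>Bl\<in>blocks. Bl \<subseteq> X \<and> card Bl = k) \<and>
     (\<exists>lam::nat. lam > 0 \<and>
        (\<forall>T. T \<subseteq> X \<and> card T = 3 \<longrightarrow> card {Bl \<in> blocks. T \<subseteq> Bl} = lam))"

definition gives_3design :: "'a::{finite,field} set \<Rightarrow> nat \<Rightarrow> bool" where
  "gives_3design B k \<longleftrightarrow> is_3design (UNIV :: 'a option set) k (psl_orbit (Some ` B))"

definition tri_chi :: "'a::field set \<Rightarrow> int" where
  "tri_chi S = (case (SOME t. case t of (x, y, z) \<Rightarrow> S = {x, y, z}) of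
       (x, y, z) \<Rightarrow> qchi ((x - y) * (y - z) * (z - x)))"

end

theory Submission
  imports Defs
begin


definition hom :: "'a::field option \<Rightarrow> 'a \<times> 'a" where
  "hom p = (case p of None \<Rightarrow> (1, 0) | Some x \<Rightarrow> (x, 1))"
definition brk :: "'a::field \<times> 'a \<Rightarrow> 'a \<times> 'a \<Rightarrow> 'a" where
  "brk u v = fst u * snd v - snd u * fst v"
definition mapM :: "'a::field \<Rightarrow> 'a \<Rightarrow> 'a \<Rightarrow> 'a \<Rightarrow> 'a \<times> 'a \<Rightarrow> 'a \<times> 'a" where
  "mapM a b c d u = (a * fst u + b * snd u, c * fst u + d * snd u)"
definition smul :: "'a::field \<Rightarrow> 'a \<times> 'a \<Rightarrow> 'a \<times> 'a" where
  "smul l u = (l * fst u, l * snd u)"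

lemma brk_mapM: "brk (mapM a b c d u) (mapM a b c d v) = (a*d - b*c) * brk u v"
  by (simp add: brk_def mapM_def algebra_simps)

lemma brk_smul1: "brk (smul l u) v = l * brk u v"
  by (simp add: brk_def smul_def algebra_simps)
lemma brk_smul2: "brk u (smul l v) = l * brk u v"
  by (simp add: brk_def smul_def algebra_simps)
lemma brk_self: "brk u u = 0"
  by (simp add: brk_def algebra_simps)
lemma brk_anti: "brk u v = - brk v u"
  by (simp add: brk_def algebra_simps)

lemma brk_hom_eq: "brk (hom p) (hom q) = 0 \<longleftrightarrow> p = q"
  by (cases p; cases q) (auto simp: brk_def hom_def)

lemma mapM_smul: "mapM a b c d (smul l u) = smul l (mapM a b c d u)"
  by (simp add: mapM_def smul_def algebra_simps)

lemma mapM_mapM: "mapM a b c d (mapM a' b' c' d' u) =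
   mapM (a*a' + b*c') (a*b' + b*d') (c*a' + d*c') (c*b' + d*d') u"
  by (simp add: mapM_def algebra_simps)

lemma lft_hom:
  assumes "a*d - b*c \<noteq> 0"
  shows "\<exists>l. l \<noteq> 0 \<and> mapM a b c d (hom p) = smul l (hom (lft a b c d p))"
proof (cases p)
  case None
  show ?thesis
  proof (cases "c = 0")
    case True
    then have "a \<noteq> 0" using assms by auto
    then show ?thesis using None True
      by (intro exI[of _ a]) (simp add: mapM_def smul_def hom_def lft_def)
  next
    case False
    then show ?thesis using None
      by (intro exI[of _ c]) (simp add: mapM_def smul_def hom_def lft_def)
  qed
next
  case (Some z)
  show ?thesis
  proof (cases "c*z + d = 0")
    case True
    then have "d = - c*z" by (simp add: eq_neg_iff_add_eq_0 add.commute)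
    have "a*z + b \<noteq> 0"
    proof
      assume "a*z + b = 0"
      then have "b = - a*z" by (simp add: eq_neg_iff_add_eq_0 add.commute)
      with \<open>d = - c*z\<close> have "a*d - b*c = 0" by (simp add: algebra_simps)
      with assms show False by simp
    qed
    then show ?thesis using Some True
      by (intro exI[of _ "a*z+b"]) (simp add: mapM_def smul_def hom_def lft_def)
  next
    case False
    then show ?thesis using Some
      by (intro exI[of _ "c*z+d"]) (simp add: mapM_def smul_def hom_def lft_def)
  qed
qed

lemma smul_hom_eq:
  assumes "l \<noteq> 0" "m \<noteq> 0" "smul l (hom p) = smul m (hom q)"
  shows "p = q"
proof -
  have "brk (smul l (hom p)) (smul m (hom q)) = 0" using assms(3) brk_self by metis
  then have "brk (hom p) (hom q) = 0" using assms(1,2) by (simp add: brk_smul1 brk_smul2)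
  then show ?thesis using brk_hom_eq by auto
qed

lemma smul_smul: "smul l (smul m u) = smul (l*m) u"
  by (simp add: smul_def algebra_simps)

lemma lft_inj:
  assumes "a*d - b*c \<noteq> 0"
  shows "inj (lft a b c d)"
proof (rule injI)
  fix p q assume eq: "lft a b c d p = lft a b c d q"
  obtain l where l: "l \<noteq> 0" "mapM a b c d (hom p) = smul l (hom (lft a b c d p))"
    using lft_hom[OF assms] by blast
  obtain m where m: "m \<noteq> 0" "mapM a b c d (hom q) = smul m (hom (lft a b c d q))"
    using lft_hom[OF assms] by blast
  have "(a*d - b*c) * brk (hom p) (hom q) = brk (mapM a b c d (hom p)) (mapM a b c d (hom q))"
    by (simp add: brk_mapM)
  also have "\<dots> = l * (m * brk (hom (lft a b c d p)) (hom (lft a b c d q)))"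
    by (simp add: l m brk_smul1 brk_smul2)
  also have "\<dots> = 0" using eq by (simp add: brk_self)
  finally show "p = q" using assms brk_hom_eq by auto
qed

lemma det_mult: "(a*a' + b*c') * (c*b' + d*d') - (a*b' + b*d') * (c*a' + d*c') = (a*d - b*c) * (a'*d' - b'*c')"
  for a b c d a' b' c' d' :: "'a::field"
  by (simp add: algebra_simps)

lemma lft_comp:
  assumes "a*d - b*c \<noteq> 0" "a'*d' - b'*c' \<noteq> 0"
  shows "lft a b c d (lft a' b' c' d' p) = lft (a*a' + b*c') (a*b' + b*d') (c*a' + d*c') (c*b' + d*d') p"
proof -
  have D: "(a*a' + b*c') * (c*b' + d*d') - (a*b' + b*d') * (c*a' + d*c') \<noteq> 0"
    using assms by (simp add: det_mult)
  obtain l2 where l2: "l2 \<noteq> 0" "mapM a' b' c' d' (hom p) = smul l2 (hom (lft a' b' c' d' p))"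
    using lft_hom[OF assms(2)] by blast
  obtain l1 where l1: "l1 \<noteq> 0" "mapM a b c d (hom (lft a' b' c' d' p)) = smul l1 (hom (lft a b c d (lft a' b' c' d' p)))"
    using lft_hom[OF assms(1)] by blast
  obtain l3 where l3: "l3 \<noteq> 0" "mapM (a*a' + b*c') (a*b' + b*d') (c*a' + d*c') (c*b' + d*d') (hom p) = smul l3 (hom (lft (a*a' + b*c') (a*b' + b*d') (c*a' + d*c') (c*b' + d*d') p))"
    using lft_hom[OF D] by blast
  have "smul (l2*l1) (hom (lft a b c d (lft a' b' c' d' p))) = mapM a b c d (mapM a' b' c' d' (hom p))"
    by (simp add: l2 l1 mapM_smul smul_smul)
  also have "\<dots> = smul l3 (hom (lft (a*a' + b*c') (a*b' + b*d') (c*a' + d*c') (c*b' + d*d') p))"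
    by (simp add: mapM_mapM l3)
  finally show ?thesis using smul_hom_eq l1 l2 l3 by (metis mult_eq_0_iff)
qed

lemma lft_scalar_id: "D \<noteq> 0 \<Longrightarrow> lft D 0 0 D p = p"
  by (cases p) (auto simp: lft_def)

lemma psl_maps_iff: "g \<in> psl_maps \<longleftrightarrow> (\<exists>a b c d e. g = lft a b c d \<and> e \<noteq> 0 \<and> a*d - b*c = e^2)"
  unfolding psl_maps_def by blast

lemma psl_comp:
  assumes "g \<in> psl_maps" "h \<in> psl_maps"
  shows "g \<circ> h \<in> psl_maps"
proof -
  obtain a b c d e where g: "g = lft a b c d" "e \<noteq> 0" "a*d - b*c = e^2"
    using assms(1) psl_maps_iff by blast
  obtain a' b' c' d' e' where h: "h = lft a' b' c' d'" "e' \<noteq> 0" "a'*d' - b'*c' = e'^2"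
    using assms(2) psl_maps_iff by blast
  have "g \<circ> h = lft (a*a' + b*c') (a*b' + b*d') (c*a' + d*c') (c*b' + d*d')"
    using g h by (intro ext) (simp add: lft_comp)
  moreover have "(a*a' + b*c') * (c*b' + d*d') - (a*b' + b*d') * (c*a' + d*c') = (e*e')^2"
    by (simp add: det_mult g h power_mult_distrib)
  moreover have "e*e' \<noteq> 0" using g h by simp
  ultimately show ?thesis unfolding psl_maps_iff by blast
qed

lemma psl_inv:
  assumes "g \<in> psl_maps"
  shows "\<exists>h\<in>psl_maps. (\<forall>p. g (h p) = p) \<and> (\<forall>p. h (g p) = p)"
proof -
  obtain a b c d e where g: "g = lft a b c d" "e \<noteq> 0" "a*d - b*c = e^2"
    using assms(1) psl_maps_iff by blast
  have D: "a*d - b*c \<noteq> 0" using g by simp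
  have D': "d*a - (-b)*(-c) \<noteq> 0" using D by (simp add: algebra_simps)
  have h: "lft d (-b) (-c) a \<in> psl_maps" unfolding psl_maps_iff
    using g by (intro exI[of _ d] exI[of _ "-b"] exI[of _ "-c"] exI[of _ a] exI[of _ e]) (simp add: algebra_simps)
  have 1: "g (lft d (-b) (-c) a p) = p" for p
    using lft_comp[OF D D', of p] lft_scalar_id[OF D] g
    by (simp add: algebra_simps)
  have 2: "lft d (-b) (-c) a (g p) = p" for p
  proof -
    have D2: "a*d - b*c = d*a - (-b)*(-c)" by (simp add: algebra_simps)
    show ?thesis
    using lft_comp[OF D' D, of p] lft_scalar_id[OF D] g
    by (simp add: algebra_simps)
  qed
  show ?thesis using h 1 2 by blast
qed

lemma psl_inj: "g \<in> psl_maps \<Longrightarrow> inj g"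
  unfolding psl_maps_iff using lft_inj by force

lemma psl_id: "id \<in> psl_maps"
proof -
  have "id = lft (1::'a) 0 0 1" by (intro ext) (simp add: lft_scalar_id[of 1, simplified])
  then show ?thesis unfolding psl_maps_iff
    by (intro exI[of _ 1] exI[of _ 0] exI[of _ 0] exI[of _ 1] exI[of _ 1]) simp
qed



lemma card_fibers2:
  assumes "finite A" "\<forall>x\<in>A. card {y\<in>A. f y = f x} = 2"
  shows "card A = 2 * card (f ` A)"
proof -
  have A: "A = (\<Union>b\<in>f ` A. {y\<in>A. f y = b})" by auto
  have "card A = (\<Sum>b\<in>f ` A. card {y\<in>A. f y = b})"
    by (subst A, rule card_UN_disjoint) (use assms in auto)
  also have "\<dots> = (\<Sum>b\<in>f ` A. 2)"
    by (rule sum.cong) (use assms in auto)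
  finally show ?thesis by simp
qed

lemma two_nz:
  assumes "odd (card (UNIV :: 'a::{finite,field} set))"
  shows "(2::'a) \<noteq> 0"
proof
  assume two: "(2::'a) = 0"
  have xx: "x + 1 + 1 = x" for x :: 'a
  proof -
    have "x + 1 + 1 = x + (1 + 1)" by (simp only: add.assoc)
    also have "\<dots> = x + 2" by (simp only: one_add_one)
    finally show ?thesis using two by simp
  qed
  have ne: "x \<noteq> x + 1" for x :: 'a by simp
  have "card (UNIV :: 'a set) = 2 * card ((\<lambda>x. {x, x+1}) ` (UNIV :: 'a set))"
  proof (rule card_fibers2)
    show "\<forall>x\<in>UNIV. card {y \<in> UNIV. {y, y + 1} = {x, x + (1::'a)}} = 2"
    proof
      fix x :: 'a
      have "{y \<in> UNIV. {y, y + 1} = {x, x + 1}} = {x, x+1}"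
      proof (intro equalityI subsetI)
        fix y assume "y \<in> {y \<in> UNIV. {y, y + 1} = {x, x + 1}}"
        then have "y \<in> {x, x+1}" by (metis (mono_tags, lifting) insertI1 mem_Collect_eq)
        then show "y \<in> {x, x+1}" .
      next
        fix y assume "y \<in> {x, x+1}"
        then have "y = x \<or> y = x + 1" by simp
        then show "y \<in> {y \<in> UNIV. {y, y + 1} = {x, x + 1}}"
        proof
          assume "y = x" then show ?thesis by simp
        next
          assume "y = x + 1"
          then have "{y, y+1} = {x+1, x}" using xx[of x] by simp
          then show ?thesis by (simp add: insert_commute)
        qed
      qed
      then show "card {y \<in> UNIV. {y, y + 1} = {x, x + 1}} = 2" using ne[of x] by simp
    qed
  qed simp
  then show False using assms by simp
qed

definition Sq :: "'a::field set" where "Sq = {x. x \<noteq> 0 \<and> (\<exists>y. y^2 = x)}"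

lemma qchi_cases: "qchi x = (if x = 0 then 0 else if x \<in> Sq then 1 else -1)"
  by (simp add: qchi_def Sq_def)

lemma qchi_sq:
  assumes "s \<noteq> 0"
  shows "qchi (s^2 * x) = qchi x"
proof -
  have "(\<exists>y. y^2 = s^2 * x) \<longleftrightarrow> (\<exists>y. y^2 = x)"
  proof
    assume "\<exists>y. y^2 = s^2 * x"
    then obtain y where "y^2 = s^2*x" by blast
    then have "(y/s)^2 = x" using assms by (simp add: power_divide field_simps)
    then show "\<exists>y. y^2 = x" by blast
  next
    assume "\<exists>y. y^2 = x"
    then obtain y where "y^2 = x" by blast
    then have "(s*y)^2 = s^2*x" by (simp add: power_mult_distrib)
    then show "\<exists>y. y^2 = s^2*x" by blast
  qed
  moreover have "s^2 * x = 0 \<longleftrightarrow> x = 0" using assms by simp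
  ultimately show ?thesis unfolding qchi_def by presburger
qed

lemma card_Sq:
  assumes "odd (card (UNIV :: 'a::{finite,field} set))"
  shows "card (UNIV - {0::'a}) = 2 * card (Sq :: 'a set)"
proof -
  have 2: "(2::'a) \<noteq> 0" using two_nz[OF assms] .
  have img: "(\<lambda>y. y^2) ` (UNIV - {0::'a}) = Sq"
  proof (intro equalityI subsetI)
    fix x assume "x \<in> (\<lambda>y. y^2) ` (UNIV - {0::'a})"
    then obtain y where "y \<noteq> 0" "x = y^2" by blast
    then show "x \<in> Sq" unfolding Sq_def by auto
  next
    fix x assume "x \<in> (Sq::'a set)"
    then obtain y where "x \<noteq> 0" "y^2 = x" unfolding Sq_def by blast
    then have "y \<noteq> 0" by auto
    with \<open>y^2 = x\<close> show "x \<in> (\<lambda>y. y^2) ` (UNIV - {0::'a})" by blast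
  qed
  have "card (UNIV - {0::'a}) = 2 * card ((\<lambda>y. y^2) ` (UNIV - {0::'a}))"
  proof (rule card_fibers2)
    show "\<forall>x\<in>UNIV - {0::'a}. card {y \<in> UNIV - {0}. y^2 = x^2} = 2"
    proof
      fix x :: 'a assume x: "x \<in> UNIV - {0}"
      have "{y \<in> UNIV - {0}. y^2 = x^2} = {x, -x}"
      proof (intro equalityI subsetI)
        fix y assume "y \<in> {y \<in> UNIV - {0}. y^2 = x^2}"
        then have "y^2 = x^2" by simp
        then have "y = x \<or> y = -x" using power2_eq_iff by blast
        then show "y \<in> {x, -x}" by blast
      next
        fix y assume "y \<in> {x, -x}"
        then show "y \<in> {y \<in> UNIV - {0}. y^2 = x^2}" using x by auto
      qed
      moreover have "x \<noteq> -x"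
      proof
        assume "x = -x" then have "x + x = 0" by (metis add.right_inverse)
        then have "2 * x = 0" by (simp only: mult_2)
        then show False using 2 x by simp
      qed
      ultimately show "card {y \<in> UNIV - {0}. y^2 = x^2} = 2" by simp
    qed
  qed simp
  then show ?thesis using img by simp
qed

lemma card_Nz: "card (UNIV - {0::'a::{finite,field}}) = card (UNIV :: 'a set) - 1"
  by (simp add: card_Diff_singleton)

lemma one_Sq: "(1::'a::field) \<in> Sq"
  unfolding Sq_def by (auto intro: exI[of _ 1])

lemma Sq_mult: "x \<in> Sq \<Longrightarrow> y \<in> Sq \<Longrightarrow> x * y \<in> Sq"
  unfolding Sq_def by (auto simp: power_mult_distrib[symmetric])

lemma Sq_inverse: "x \<in> Sq \<Longrightarrow> inverse x \<in> Sq"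
  unfolding Sq_def by (auto simp: power_inverse[symmetric])

lemma Sq_nz: "x \<in> Sq \<Longrightarrow> x \<noteq> 0"
  unfolding Sq_def by auto

lemma Sq_sq: "s \<noteq> 0 \<Longrightarrow> s^2 \<in> Sq"
  unfolding Sq_def by auto

lemma odd_of_mod4:
  assumes q1: "card (UNIV :: 'a::{finite,field} set) mod 4 = 1"
  shows "odd (card (UNIV :: 'a set))"
  using q1 by presburger

lemma minus_one_sq:
  assumes q1: "card (UNIV :: 'a::{finite,field} set) mod 4 = 1"
  shows "(-1::'a) \<in> Sq"
proof (rule ccontr)
  assume nm: "(-1::'a) \<notin> Sq"
  have odd: "odd (card (UNIV :: 'a set))" using odd_of_mod4[OF q1] .
  have cS: "card (UNIV - {0::'a}) = 2 * card (Sq :: 'a set)" using card_Sq[OF odd] .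
  have ev: "even (card (Sq :: 'a set))"
  proof -
    have "card (UNIV :: 'a set) - 1 = 2 * card (Sq :: 'a set)" using cS card_Nz by metis
    then show ?thesis using q1 by presburger
  qed
  define NF where "NF = {x \<in> (Sq::'a set). x \<noteq> inverse x}"
  define FX where "FX = {x \<in> (Sq::'a set). x = inverse x}"
  have FX: "FX = {1}"
  proof (intro equalityI subsetI)
    fix x assume "x \<in> FX"
    then have x: "x \<in> Sq" "x = inverse x" unfolding FX_def by auto
    then have "x \<noteq> 0" using Sq_nz by auto
    then have "x * x = 1" using x(2) by (metis right_inverse)
    then have "x^2 = 1" by (simp add: power2_eq_square)
    then have "x = 1 \<or> x = -1" using power2_eq_1_iff by blast
    then show "x \<in> {1}" using x nm by auto
  next
    fix x assume "x \<in> {1::'a}"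
    then show "x \<in> FX" unfolding FX_def using one_Sq by auto
  qed
  have un: "Sq = NF \<union> FX" "NF \<inter> FX = {}" unfolding NF_def FX_def by auto
  have cNF: "card NF = 2 * card ((\<lambda>x. {x, inverse x}) ` NF)"
  proof (rule card_fibers2)
    show "\<forall>x\<in>NF. card {y \<in> NF. {y, inverse y} = {x, inverse x}} = 2"
    proof
      fix x assume x: "x \<in> NF"
      then have xs: "x \<in> Sq" "x \<noteq> inverse x" unfolding NF_def by auto
      have ix: "inverse x \<in> NF" using xs Sq_inverse unfolding NF_def by auto
      have "{y \<in> NF. {y, inverse y} = {x, inverse x}} = {x, inverse x}"
      proof (intro equalityI subsetI)
        fix y assume "y \<in> {y \<in> NF. {y, inverse y} = {x, inverse x}}"
        then have "{y, inverse y} = {x, inverse x}" by blast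
        then show "y \<in> {x, inverse x}" by (metis insertI1)
      next
        fix y assume "y \<in> {x, inverse x}"
        then have "y = x \<or> y = inverse x" by simp
        then show "y \<in> {y \<in> NF. {y, inverse y} = {x, inverse x}}"
        proof
          assume "y = x" then show ?thesis using x by simp
        next
          assume "y = inverse x"
          then have "{y, inverse y} = {inverse x, x}" by simp
          then show ?thesis using ix \<open>y = inverse x\<close> by (simp add: insert_commute)
        qed
      qed
      then show "card {y \<in> NF. {y, inverse y} = {x, inverse x}} = 2" using xs(2) by simp
    qed
  qed simp
  have "card (NF \<union> FX) = card NF + card FX"
    by (rule card_Un_disjoint) (use un in auto)
  then have "card (Sq::'a set) = card NF + card FX" using un(1) by simp
  then have "card (Sq::'a set) = 2 * card ((\<lambda>x. {x, inverse x}) ` NF) + 1" using cNF FX by simp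
  then show False using ev by presburger
qed

lemma nonsq_exists:
  assumes odd: "odd (card (UNIV :: 'a::{finite,field} set))"
  shows "\<exists>v::'a. v \<noteq> 0 \<and> v \<notin> Sq"
proof (rule ccontr)
  assume "\<not> ?thesis"
  then have "UNIV - {0::'a} \<subseteq> Sq" by auto
  moreover have "Sq \<subseteq> UNIV - {0::'a}" using Sq_nz by auto
  ultimately have "UNIV - {0::'a} = Sq" by blast
  then have "card (Sq::'a set) = 2 * card (Sq::'a set)" using card_Sq[OF odd] by simp
  then have "card (Sq::'a set) = 0" by simp
  then show False using one_Sq[where 'a='a] by (simp add: card_eq_0_iff)
qed

lemma nonsq_mult:
  assumes odd: "odd (card (UNIV :: 'a::{finite,field} set))"
    and v: "v \<noteq> 0" "v \<notin> Sq" and w: "(w::'a) \<noteq> 0" "w \<notin> Sq"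
  shows "v * w \<in> Sq"
proof -
  define NS where "NS = (UNIV - {0::'a}) - Sq"
  have sub: "Sq \<subseteq> UNIV - {0::'a}" using Sq_nz by auto
  have cNS: "card NS = card (Sq::'a set)"
    using card_Sq[OF odd] sub unfolding NS_def by (simp add: card_Diff_subset)
  have img: "(\<lambda>x. v * x) ` Sq \<subseteq> NS"
  proof
    fix y assume "y \<in> (\<lambda>x. v * x) ` Sq"
    then obtain x where x: "x \<in> Sq" "y = v * x" by blast
    have "y \<noteq> 0" using x v Sq_nz by auto
    moreover have "y \<notin> Sq"
    proof
      assume "y \<in> Sq"
      then have "y * inverse x \<in> Sq" using x Sq_inverse Sq_mult by blast
      moreover have "y * inverse x = v" using x Sq_nz[OF x(1)] by simp
      ultimately show False using v by simp
    qed
    ultimately show "y \<in> NS" unfolding NS_def by simp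
  qed
  have inj: "inj_on (\<lambda>x. v * x) Sq" using v by (auto intro: inj_onI)
  have "(\<lambda>x. v * x) ` Sq = NS"
    by (rule card_subset_eq) (use img inj cNS in \<open>simp_all add: card_image\<close>)
  moreover have "w \<in> NS" using w unfolding NS_def by simp
  ultimately obtain x where x: "x \<in> Sq" "w = v * x" by blast
  have "v * w = v^2 * x" using x by (simp add: power2_eq_square)
  then show ?thesis using Sq_mult[OF Sq_sq[OF v(1)] x(1)] by simp
qed

lemma qchi_mult:
  assumes odd: "odd (card (UNIV :: 'a::{finite,field} set))"
  shows "qchi (x * y :: 'a) = qchi x * qchi y"
proof (cases "x = 0 \<or> y = 0")
  case True then show ?thesis by (auto simp: qchi_def)
next
  case False
  then have nz: "x \<noteq> 0" "y \<noteq> 0" by auto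
  have dv: "a \<in> Sq \<Longrightarrow> a * b \<in> Sq \<Longrightarrow> b \<in> Sq" if "a \<noteq> 0" for a b :: 'a
  proof -
    assume "a \<in> Sq" "a * b \<in> Sq"
    then have "inverse a * (a * b) \<in> Sq" using Sq_inverse Sq_mult by blast
    then show "b \<in> Sq" using that by (simp add: mult.assoc[symmetric])
  qed
  show ?thesis
  proof (cases "x \<in> Sq")
    case xs: True
    show ?thesis
    proof (cases "y \<in> Sq")
      case True
      then have "x * y \<in> Sq" using xs Sq_mult by blast
      then show ?thesis using xs True nz by (simp add: qchi_cases)
    next
      case False
      then have "x * y \<notin> Sq" using dv[OF nz(1) xs] by blast
      then show ?thesis using xs False nz by (simp add: qchi_cases)
    qed
  next
    case xn: False
    show ?thesis
    proof (cases "y \<in> Sq")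
      case True
      then have "x * y \<notin> Sq" using dv[OF nz(2) True] xn by (metis mult.commute)
      then show ?thesis using xn True nz by (simp add: qchi_cases)
    next
      case False
      then have "x * y \<in> Sq" using nonsq_mult[OF odd] xn nz by blast
      then show ?thesis using xn False nz by (simp add: qchi_cases)
    qed
  qed
qed

lemma qchi_neg:
  assumes q1: "card (UNIV :: 'a::{finite,field} set) mod 4 = 1"
  shows "qchi (- x :: 'a) = qchi x"
proof -
  have b: "qchi (-1::'a) = 1" using minus_one_sq[OF q1] by (simp add: qchi_cases)
  have "qchi (- x) = qchi ((-1) * x)" by simp
  also have "\<dots> = qchi (-1::'a) * qchi x" by (rule qchi_mult[OF odd_of_mod4[OF q1]])
  also have "\<dots> = qchi x" using b by simp
  finally show ?thesis .
qed



definition pb :: "'a::field option \<Rightarrow> 'a option \<Rightarrow> 'a option \<Rightarrow> 'a" where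
  "pb p q r = brk (hom p) (hom q) * brk (hom q) (hom r) * brk (hom r) (hom p)"

definition inv3 :: "'a::field option \<Rightarrow> 'a option \<Rightarrow> 'a option \<Rightarrow> int" where
  "inv3 p q r = qchi (pb p q r)"

lemma brk_lft:
  assumes "a*d - b*c \<noteq> 0"
    and "mapM a b c d (hom p) = smul lp (hom (lft a b c d p))"
    and "mapM a b c d (hom q) = smul lq (hom (lft a b c d q))"
  shows "lp * lq * brk (hom (lft a b c d p)) (hom (lft a b c d q)) = (a*d - b*c) * brk (hom p) (hom q)"
proof -
  have "(a*d - b*c) * brk (hom p) (hom q) = brk (mapM a b c d (hom p)) (mapM a b c d (hom q))"
    by (simp add: brk_mapM)
  also have "\<dots> = lp * (lq * brk (hom (lft a b c d p)) (hom (lft a b c d q)))"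
    by (simp add: assms(2,3) brk_smul1 brk_smul2)
  finally show ?thesis by (simp add: mult.assoc)
qed

lemma pb_lft:
  assumes D: "a*d - b*c \<noteq> 0"
  shows "\<exists>L. L \<noteq> 0 \<and> L^2 * pb (lft a b c d p) (lft a b c d q) (lft a b c d r) = (a*d - b*c)^3 * pb p q r"
proof -
  obtain lp where lp: "lp \<noteq> 0" "mapM a b c d (hom p) = smul lp (hom (lft a b c d p))"
    using lft_hom[OF D] by blast
  obtain lq where lq: "lq \<noteq> 0" "mapM a b c d (hom q) = smul lq (hom (lft a b c d q))"
    using lft_hom[OF D] by blast
  obtain lr where lr: "lr \<noteq> 0" "mapM a b c d (hom r) = smul lr (hom (lft a b c d r))"
    using lft_hom[OF D] by blast
  have 1: "lp * lq * brk (hom (lft a b c d p)) (hom (lft a b c d q)) = (a*d - b*c) * brk (hom p) (hom q)"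
    by (rule brk_lft[OF D lp(2) lq(2)])
  have 2: "lq * lr * brk (hom (lft a b c d q)) (hom (lft a b c d r)) = (a*d - b*c) * brk (hom q) (hom r)"
    by (rule brk_lft[OF D lq(2) lr(2)])
  have 3: "lr * lp * brk (hom (lft a b c d r)) (hom (lft a b c d p)) = (a*d - b*c) * brk (hom r) (hom p)"
    by (rule brk_lft[OF D lr(2) lp(2)])
  have "(lp*lq*lr)^2 * pb (lft a b c d p) (lft a b c d q) (lft a b c d r) =
     (lp * lq * brk (hom (lft a b c d p)) (hom (lft a b c d q))) *
     (lq * lr * brk (hom (lft a b c d q)) (hom (lft a b c d r))) *
     (lr * lp * brk (hom (lft a b c d r)) (hom (lft a b c d p)))"
    unfolding pb_def by (simp add: power2_eq_square algebra_simps)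
  also have "\<dots> = (a*d - b*c)^3 * pb p q r"
    unfolding 1 2 3 pb_def by (simp add: power3_eq_cube algebra_simps)
  finally show ?thesis using lp lq lr by (intro exI[of _ "lp*lq*lr"]) simp
qed

lemma inv3_lft:
  assumes q1: "card (UNIV :: 'a::{finite,field} set) mod 4 = 1"
    and D: "a*d - b*c \<noteq> (0::'a)"
  shows "inv3 (lft a b c d p) (lft a b c d q) (lft a b c d r) = qchi (a*d - b*c) * inv3 p q r"
proof -
  have odd: "odd (card (UNIV :: 'a set))" using odd_of_mod4[OF q1] .
  obtain L where L: "L \<noteq> 0" "L^2 * pb (lft a b c d p) (lft a b c d q) (lft a b c d r) = (a*d - b*c)^3 * pb p q r"
    using pb_lft[OF D] by blast
  have "inv3 (lft a b c d p) (lft a b c d q) (lft a b c d r) = qchi (L^2 * pb (lft a b c d p) (lft a b c d q) (lft a b c d r))"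
    unfolding inv3_def using qchi_sq[OF L(1)] by simp
  also have "\<dots> = qchi ((a*d - b*c)^2 * ((a*d - b*c) * pb p q r))"
    unfolding L(2) by (simp add: power2_eq_square power3_eq_cube mult.assoc)
  also have "\<dots> = qchi ((a*d - b*c) * pb p q r)" using qchi_sq[OF D] by simp
  also have "\<dots> = qchi (a*d - b*c) * inv3 p q r" unfolding inv3_def by (rule qchi_mult[OF odd])
  finally show ?thesis .
qed

lemma pb_swap: "pb q p r = - pb p q r"
proof -
  have e: "brk (hom q) (hom p) = - brk (hom p) (hom q)" "brk (hom p) (hom r) = - brk (hom r) (hom p)"
    "brk (hom r) (hom q) = - brk (hom q) (hom r)" by (rule brk_anti)+
  show ?thesis unfolding pb_def e by (simp add: algebra_simps)
qed

lemma pb_rot: "pb q r p = pb p q r"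
  unfolding pb_def by (simp add: mult.commute mult.left_commute)

lemma inv3_swap:
  assumes q1: "card (UNIV :: 'a::{finite,field} set) mod 4 = 1"
  shows "inv3 q p r = inv3 p q (r::'a option)"
proof -
  have e: "pb q p r = - pb p q r" by (rule pb_swap)
  have "inv3 q p r = qchi (- pb p q r)" unfolding inv3_def e ..
  also have "\<dots> = inv3 p q r" unfolding inv3_def by (rule qchi_neg[OF q1])
  finally show ?thesis .
qed

lemma inv3_rot: "inv3 q r p = inv3 p q r"
  unfolding inv3_def by (rule arg_cong[where f=qchi, OF pb_rot])

lemma pb_nz: "pb p q r \<noteq> 0 \<longleftrightarrow> p \<noteq> q \<and> q \<noteq> r \<and> r \<noteq> p"
  unfolding pb_def using brk_hom_eq by auto

lemma inv3_perm:
  assumes q1: "card (UNIV :: 'a::{finite,field} set) mod 4 = 1"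
    and eq: "{p', q', r'} = {p, q, (r::'a option)}"
    and dist: "p \<noteq> q" "q \<noteq> r" "p \<noteq> r"
  shows "inv3 p' q' r' = inv3 p q r"
proof -
  have s1: "inv3 q p r = inv3 p q r" "inv3 q r p = inv3 p q r" "inv3 r p q = inv3 p q r"
     "inv3 p r q = inv3 p q r" "inv3 r q p = inv3 p q r"
    using inv3_swap[OF q1] inv3_rot by metis+
  have c3: "card {p', q', r'} = 3" using eq dist by simp
  have c2: "card {a, b::'a option} \<le> 2" for a b by (simp add: card_insert_if)
  have d': "p' \<noteq> q'" "q' \<noteq> r'" "p' \<noteq> r'"
  proof -
    show "p' \<noteq> q'" proof assume "p' = q'" then have "{p',q',r'} = {q',r'}" by simp
      then show False using c3 c2[of q' r'] by simp qed
    show "q' \<noteq> r'" proof assume "q' = r'" then have "{p',q',r'} = {p',r'}" by simp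
      then show False using c3 c2[of p' r'] by simp qed
    show "p' \<noteq> r'" proof assume "p' = r'" then have "{p',q',r'} = {q',r'}" by auto
      then show False using c3 c2[of q' r'] by simp qed
  qed
  have m: "p' \<in> {p,q,r}" "q' \<in> {p,q,r}" "r' \<in> {p,q,r}" using eq by blast+
  show ?thesis using m d' s1 by auto
qed

definition invS :: "'a::field option set \<Rightarrow> int" where
  "invS T = (SOME v. \<exists>p q r. T = {p, q, r} \<and> v = inv3 p q r)"

lemma invS_eq:
  assumes q1: "card (UNIV :: 'a::{finite,field} set) mod 4 = 1"
    and T: "T = {p, q, (r::'a option)}" and dist: "p \<noteq> q" "q \<noteq> r" "p \<noteq> r"
  shows "invS T = inv3 p q r"
proof -
  have "\<exists>v. \<exists>p q r. T = {p, q, r} \<and> v = inv3 p q r" using T by blast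
  then have "\<exists>p' q' r'. T = {p', q', r'} \<and> invS T = inv3 p' q' r'"
    unfolding invS_def by (rule someI_ex)
  then obtain p' q' r' where "T = {p', q', r'}" "invS T = inv3 p' q' r'" by blast
  then show ?thesis using inv3_perm[OF q1, of p' q' r' p q r] T dist by simp
qed

lemma card3_obtain:
  assumes "card T = 3"
  obtains p q r where "T = {p, q, r}" "p \<noteq> q" "q \<noteq> r" "p \<noteq> r"
  using assms card_3_iff by metis

lemma invS_pm:
  assumes q1: "card (UNIV :: 'a::{finite,field} set) mod 4 = 1"
    and T: "card (T :: 'a option set) = 3"
  shows "invS T = 1 \<or> invS T = -1"
proof -
  obtain p q r where pqr: "T = {p, q, r}" "p \<noteq> q" "q \<noteq> r" "p \<noteq> r"
    using T card3_obtain by blast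
  have "pb p q r \<noteq> 0" using pqr pb_nz by auto
  then show ?thesis using invS_eq[OF q1 pqr] unfolding inv3_def qchi_def by auto
qed

lemma invS_img:
  assumes q1: "card (UNIV :: 'a::{finite,field} set) mod 4 = 1"
    and D: "a*d - b*c \<noteq> (0::'a)"
    and T: "card (T :: 'a option set) = 3"
  shows "invS (lft a b c d ` T) = qchi (a*d - b*c) * invS T"
proof -
  obtain p q r where pqr: "T = {p, q, r}" "p \<noteq> q" "q \<noteq> r" "p \<noteq> r"
    using T card3_obtain by blast
  have inj: "inj (lft a b c d)" using lft_inj[OF D] .
  have img: "lft a b c d ` T = {lft a b c d p, lft a b c d q, lft a b c d r}" using pqr by simp
  have "invS (lft a b c d ` T) = inv3 (lft a b c d p) (lft a b c d q) (lft a b c d r)"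
    by (rule invS_eq[OF q1 img]) (use pqr inj in \<open>auto dest: injD\<close>)
  also have "\<dots> = qchi (a*d - b*c) * inv3 p q r" by (rule inv3_lft[OF q1 D])
  also have "\<dots> = qchi (a*d - b*c) * invS T" using invS_eq[OF q1 pqr] by simp
  finally show ?thesis .
qed

lemma tri_chi_eq:
  assumes q1: "card (UNIV :: 'a::{finite,field} set) mod 4 = 1"
    and S: "card (S :: 'a set) = 3"
  shows "tri_chi S = invS (Some ` S)"
proof -
  obtain x y z where xyz: "S = {x, y, z}" "x \<noteq> y" "y \<noteq> z" "x \<noteq> z"
    using S card3_obtain by blast
  have ex: "\<exists>t. case t of (x, y, z) \<Rightarrow> S = {x, y, z}" using xyz by auto
  obtain x' y' z' where t: "(SOME t. case t of (x, y, z) \<Rightarrow> S = {x, y, z}) = (x', y', z')"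
    by (metis prod_cases3)
  have S': "S = {x', y', z'}" using someI_ex[OF ex] unfolding t by simp
  have "tri_chi S = qchi ((x' - y') * (y' - z') * (z' - x'))"
    unfolding tri_chi_def t by simp
  also have "\<dots> = inv3 (Some x') (Some y') (Some z')"
    unfolding inv3_def pb_def by (simp add: hom_def brk_def)
  also have "\<dots> = inv3 (Some x) (Some y) (Some z)"
    by (rule inv3_perm[OF q1]) (use xyz S' in auto)
  also have "\<dots> = invS (Some ` S)"
    by (rule invS_eq[OF q1, symmetric]) (use xyz in auto)
  finally show ?thesis .
qed



lemma qchi_one_sq: "qchi x = 1 \<Longrightarrow> \<exists>e. e \<noteq> 0 \<and> x = e^2"
  unfolding qchi_def by (auto split: if_splits)

lemma smul_eq_hom: "l \<noteq> 0 \<Longrightarrow> mapM a b c d (hom p) = smul l (hom (lft a b c d p)) \<Longrightarrow>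
   mapM a b c d (hom p) = smul m (hom q) \<Longrightarrow> m \<noteq> 0 \<Longrightarrow> lft a b c d p = q"
  using smul_hom_eq by metis

lemma transitive:
  assumes q1: "card (UNIV :: 'a::{finite,field} set) mod 4 = 1"
    and T: "card (T :: 'a option set) = 3"
    and t: "t \<noteq> 0" "qchi t = invS T"
  shows "\<exists>g\<in>psl_maps. g ` {None, Some 0, Some t} = T"
proof -
  have odd: "odd (card (UNIV :: 'a set))" using odd_of_mod4[OF q1] .
  obtain p q r where pqr: "T = {p, q, r}" "p \<noteq> q" "q \<noteq> r" "p \<noteq> r"
    using T card3_obtain by blast
  obtain p1 p2 where P: "hom p = (p1, p2)" by (cases "hom p")
  obtain q1' q2 where Q: "hom q = (q1', q2)" by (cases "hom q")
  obtain r1 r2 where R: "hom r = (r1, r2)" by (cases "hom r")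
  define w where "w = p1 * q2 - p2 * q1'"
  have w: "w \<noteq> 0" using brk_hom_eq[of p q] pqr P Q unfolding w_def brk_def by simp
  define \<alpha> where "\<alpha> = (r1 * q2 - r2 * q1') / w"
  define \<beta> where "\<beta> = (p1 * r2 - p2 * r1) / w"
  have \<alpha>: "\<alpha> \<noteq> 0" using brk_hom_eq[of r q] pqr R Q w unfolding \<alpha>_def brk_def by auto
  have \<beta>: "\<beta> \<noteq> 0" using brk_hom_eq[of p r] pqr P R w unfolding \<beta>_def brk_def by auto
  have cr1: "r1 = \<alpha> * p1 + \<beta> * q1'"
  proof -
    have e1: "(r1 * q2 - r2 * q1') * p1 + (p1 * r2 - p2 * r1) * q1' = r1 * w"
      unfolding w_def by (simp add: algebra_simps)
    have "\<alpha> * p1 + \<beta> * q1' = ((r1 * q2 - r2 * q1') * p1 + (p1 * r2 - p2 * r1) * q1') / w"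
      unfolding \<alpha>_def \<beta>_def by (simp add: add_divide_distrib)
    also have "\<dots> = r1" unfolding e1 using w by simp
    finally show ?thesis by simp
  qed
  have cr2: "r2 = \<alpha> * p2 + \<beta> * q2"
  proof -
    have e1: "(r1 * q2 - r2 * q1') * p2 + (p1 * r2 - p2 * r1) * q2 = r2 * w"
      unfolding w_def by (simp add: algebra_simps)
    have "\<alpha> * p2 + \<beta> * q2 = ((r1 * q2 - r2 * q1') * p2 + (p1 * r2 - p2 * r1) * q2) / w"
      unfolding \<alpha>_def \<beta>_def by (simp add: add_divide_distrib)
    also have "\<dots> = r2" unfolding e1 using w by simp
    finally show ?thesis by simp
  qed
  define a where "a = \<alpha> * p1"
  define b where "b = t * \<beta> * q1'"
  define c where "c = \<alpha> * p2"
  define d where "d = t * \<beta> * q2"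
  have det: "a*d - b*c = t * (\<alpha> * \<beta> * w)"
    unfolding a_def b_def c_def d_def w_def by (simp add: algebra_simps)
  have D: "a*d - b*c \<noteq> 0" using det t \<alpha> \<beta> w by simp
  have "invS T = inv3 p q r" using invS_eq[OF q1 pqr] .
  also have "\<dots> = qchi (w^2 * (\<alpha> * \<beta> * w))"
  proof -
    have "pb p q r = w^2 * (\<alpha> * \<beta> * w)"
    proof -
      have "pb p q r = w * (r2 * q1' - r1 * q2) * (r1 * p2 - r2 * p1)"
        unfolding pb_def P Q R brk_def w_def by (simp add: algebra_simps)
      also have "r2 * q1' - r1 * q2 = - \<alpha> * w" unfolding \<alpha>_def using w by (simp add: field_simps)
      also have "r1 * p2 - r2 * p1 = - \<beta> * w" unfolding \<beta>_def using w by (simp add: field_simps)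
      finally show ?thesis by (simp add: power2_eq_square algebra_simps)
    qed
    then show ?thesis unfolding inv3_def by simp
  qed
  also have "\<dots> = qchi (\<alpha> * \<beta> * w)" using qchi_sq[OF w] .
  finally have iT: "invS T = qchi (\<alpha> * \<beta> * w)" .
  have "qchi (a*d - b*c) = qchi t * qchi (\<alpha> * \<beta> * w)" unfolding det by (rule qchi_mult[OF odd])
  also have "\<dots> = invS T * invS T" using t iT by simp
  also have "\<dots> = 1" using invS_pm[OF q1 T] by auto
  finally obtain e where e: "e \<noteq> 0" "a*d - b*c = e^2" using qchi_one_sq by blast
  have gin: "lft a b c d \<in> psl_maps" unfolding psl_maps_iff using e by blast
  have img1: "lft a b c d None = p"
  proof -
    obtain l where l: "l \<noteq> 0" "mapM a b c d (hom None) = smul l (hom (lft a b c d None))"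
      using lft_hom[OF D] by blast
    have "mapM a b c d (hom None) = smul \<alpha> (hom p)"
      unfolding P by (simp add: mapM_def hom_def smul_def a_def c_def)
    then show ?thesis using smul_eq_hom[OF l(1) l(2)] \<alpha> by blast
  qed
  have img2: "lft a b c d (Some 0) = q"
  proof -
    obtain l where l: "l \<noteq> 0" "mapM a b c d (hom (Some 0)) = smul l (hom (lft a b c d (Some 0)))"
      using lft_hom[OF D] by blast
    have "mapM a b c d (hom (Some 0)) = smul (t * \<beta>) (hom q)"
      unfolding Q by (simp add: mapM_def hom_def smul_def b_def d_def)
    then show ?thesis using smul_eq_hom[OF l(1) l(2)] \<beta> t by simp
  qed
  have img3: "lft a b c d (Some t) = r"
  proof -
    obtain l where l: "l \<noteq> 0" "mapM a b c d (hom (Some t)) = smul l (hom (lft a b c d (Some t)))"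
      using lft_hom[OF D] by blast
    have "mapM a b c d (hom (Some t)) = smul t (hom r)"
      unfolding R cr1 cr2 by (simp add: mapM_def hom_def smul_def a_def b_def c_def d_def algebra_simps)
    then show ?thesis using smul_eq_hom[OF l(1) l(2)] t by simp
  qed
  have "lft a b c d ` {None, Some 0, Some t} = T" using img1 img2 img3 pqr by simp
  then show ?thesis using gin by blast
qed



lemma double_count:
  assumes "finite A" "finite C"
  shows "(\<Sum>a\<in>A. card {c\<in>C. R a c}) = (\<Sum>c\<in>C. card {a\<in>A. R a c})"
  unfolding card_eq_sum by (rule sum.swap_restrict[OF assms, of "\<lambda>_ _. (1::nat)" R])

lemma psl_orbit_iff: "Bl \<in> psl_orbit S \<longleftrightarrow> (\<exists>g\<in>psl_maps. Bl = g ` S)"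
  unfolding psl_orbit_def by blast

lemma N_le:
  fixes S :: "'a::{finite,field} option set"
  assumes g: "g \<in> psl_maps"
  shows "card {Bl \<in> psl_orbit S. T \<subseteq> Bl} \<le> card {Bl \<in> psl_orbit S. g ` T \<subseteq> Bl}"
proof (rule card_inj_on_le)
  have inj: "inj g" using psl_inj[OF g] .
  show "inj_on ((`) g) {Bl \<in> psl_orbit S. T \<subseteq> Bl}"
    by (rule inj_onI) (simp add: inj_image_eq_iff[OF inj])
  show "(`) g ` {Bl \<in> psl_orbit S. T \<subseteq> Bl} \<subseteq> {Bl \<in> psl_orbit S. g ` T \<subseteq> Bl}"
  proof
    fix X assume "X \<in> (`) g ` {Bl \<in> psl_orbit S. T \<subseteq> Bl}"
    then obtain Bl where Bl: "Bl \<in> psl_orbit S" "T \<subseteq> Bl" "X = g ` Bl" by blast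
    then obtain h where h: "h \<in> psl_maps" "Bl = h ` S" using psl_orbit_iff by blast
    have "X = (g \<circ> h) ` S" using Bl h by (simp add: image_comp)
    then have "X \<in> psl_orbit S" using psl_comp[OF g h(1)] psl_orbit_iff by blast
    moreover have "g ` T \<subseteq> X" using Bl by blast
    ultimately show "X \<in> {Bl \<in> psl_orbit S. g ` T \<subseteq> Bl}" by blast
  qed
qed simp

lemma N_eq:
  fixes S :: "'a::{finite,field} option set"
  assumes g: "g \<in> psl_maps"
  shows "card {Bl \<in> psl_orbit S. g ` T \<subseteq> Bl} = card {Bl \<in> psl_orbit S. T \<subseteq> Bl}"
proof -
  obtain h where h: "h \<in> psl_maps" "\<forall>p. g (h p) = p" "\<forall>p. h (g p) = p" using psl_inv[OF g] by blast
  have "h ` (g ` T) = T" using h(3) by (simp add: image_comp comp_def)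
  then show ?thesis using N_le[OF g, of S T] N_le[OF h(1), of S "g ` T"] by simp
qed

lemma pb_std: "pb None (Some 0) (Some t) = (t::'a::field)"
  unfolding pb_def by (simp add: hom_def brk_def)

lemma invS_std:
  assumes q1: "card (UNIV :: 'a::{finite,field} set) mod 4 = 1" and t: "(t::'a) \<noteq> 0"
  shows "invS {None, Some 0, Some t} = qchi t" "card {None, Some 0, Some t} = 3"
proof -
  show "invS {None, Some 0, Some t} = qchi t"
    using invS_eq[OF q1, of "{None, Some 0, Some t}" None "Some 0" "Some t"] t
    by (simp add: inv3_def pb_std)
  show "card {None, Some 0, Some t} = 3" using t by simp
qed

lemma N_class:
  fixes S :: "'a::{finite,field} option set"
  assumes q1: "card (UNIV :: 'a set) mod 4 = 1"
    and T: "card (T :: 'a option set) = 3" and t: "t \<noteq> 0" "qchi t = invS T"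
  shows "card {Bl \<in> psl_orbit S. T \<subseteq> Bl} = card {Bl \<in> psl_orbit S. {None, Some 0, Some t} \<subseteq> Bl}"
proof -
  obtain g where g: "g \<in> psl_maps" "g ` {None, Some 0, Some t} = T" using transitive[OF q1 T t] by blast
  show ?thesis using N_eq[OF g(1), of S "{None, Some 0, Some t}"] g(2) by (simp only:)
qed

lemma psl_qchi:
  fixes g :: "'a::field option \<Rightarrow> 'a option"
  assumes g: "g \<in> psl_maps"
  obtains a b c d where "g = lft a b c d" "a*d - b*c \<noteq> 0" "qchi (a*d - b*c) = 1"
proof -
  obtain a b c d e where ge: "g = lft a b c d" "e \<noteq> 0" "a*d - b*c = e^2"
    using g psl_maps_iff by blast
  have "qchi (a*d - b*c) = qchi (e^2 * 1)" using ge by simp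
  also have "\<dots> = qchi (1::'a)" by (rule qchi_sq[OF ge(2)])
  also have "\<dots> = 1" using one_Sq by (simp add: qchi_cases)
  finally have q: "qchi (a*d - b*c) = 1" .
  have "a*d - b*c \<noteq> 0" using ge by simp
  then show ?thesis using that[OF ge(1)] q by blast
qed

lemma block_count:
  fixes S :: "'a::{finite,field} option set"
  assumes q1: "card (UNIV :: 'a set) mod 4 = 1" and g: "g \<in> psl_maps"
  shows "card {T. card T = 3 \<and> invS T = e \<and> T \<subseteq> g ` S} = card {T. card T = 3 \<and> invS T = e \<and> T \<subseteq> S}"
proof -
  obtain a b c d where gd: "g = lft a b c d" "a*d - b*c \<noteq> 0" "qchi (a*d - b*c) = 1"
    using psl_qchi[OF g] by blast
  have inj: "inj g" using psl_inj[OF g] .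
  have inv: "invS (g ` T) = invS T" if "card T = 3" for T
  proof -
    have "invS (lft a b c d ` T) = qchi (a*d-b*c) * invS T" by (rule invS_img[OF q1 gd(2) that])
    then show ?thesis using gd(1,3) by simp
  qed
  have cT: "card (g ` T) = card T" for T by (rule card_image[OF inj_on_subset[OF inj subset_UNIV]])
  have im: "(`) g ` {T. card T = 3 \<and> invS T = e \<and> T \<subseteq> S} = {T. card T = 3 \<and> invS T = e \<and> T \<subseteq> g ` S}"
  proof (intro equalityI subsetI)
    fix X assume "X \<in> (`) g ` {T. card T = 3 \<and> invS T = e \<and> T \<subseteq> S}"
    then obtain T where T: "card T = 3" "invS T = e" "T \<subseteq> S" "X = g ` T" by blast
    have "card X = 3" using T cT by simp
    moreover have "invS X = e" using T inv[OF T(1)] by simp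
    moreover have "X \<subseteq> g ` S" using T by blast
    ultimately show "X \<in> {T. card T = 3 \<and> invS T = e \<and> T \<subseteq> g ` S}" by blast
  next
    fix X assume X: "X \<in> {T. card T = 3 \<and> invS T = e \<and> T \<subseteq> g ` S}"
    then have "X \<subseteq> g ` S" by blast
    then obtain T where T: "T \<subseteq> S" "X = g ` T" unfolding subset_image_iff by blast
    have "card T = 3" using X T cT by simp
    moreover have "invS T = e" using X T inv[OF \<open>card T = 3\<close>] by simp
    ultimately show "X \<in> (`) g ` {T. card T = 3 \<and> invS T = e \<and> T \<subseteq> S}" using T by blast
  qed
  have ij: "inj_on ((`) g) {T. card T = 3 \<and> invS T = e \<and> T \<subseteq> S}"
    by (rule inj_onI) (simp add: inj_image_eq_iff[OF inj])
  show ?thesis using card_image[OF ij] unfolding im .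
qed



lemma sum_if_card:
  assumes "finite X"
  shows "(\<Sum>x\<in>X. if P x then 1 else 0 :: int) = int (card {x\<in>X. P x})"
proof -
  have "(\<Sum>x\<in>{x\<in>X. P x}. (1::int)) = (\<Sum>x\<in>X. if P x then 1 else 0)"
    by (rule sum.inter_filter[OF assms])
  then show ?thesis by simp
qed

theorem lemma2p6:
  fixes B :: "'a::{finite,field} set" and k :: nat
  assumes odd_q: "odd (card (UNIV :: 'a set))"
    and q_mod4: "(card (UNIV :: 'a set)) mod 4 = 1"
    and k_ge: "k \<ge> 3"
    and k_dvd: "k dvd (card (UNIV :: 'a set)) - 1"
    and even_quot: "even (((card (UNIV :: 'a set)) - 1) div k)"
    and B_nz: "0 \<notin> B"
    and B_one: "1 \<in> B"
    and B_mult: "\<forall>x\<in>B. \<forall>y\<in>B. x * y \<in> B"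
    and B_inv: "\<forall>x\<in>B. inverse x \<in> B"
    and B_card: "card B = k"
  shows "gives_3design B k \<longleftrightarrow> (\<Sum>S\<in>{S. S \<subseteq> B \<and> card S = 3}. tri_chi S) = 0"
proof -
  note q1 = q_mod4
  obtain v :: 'a where v: "v \<noteq> 0" "v \<notin> Sq" using nonsq_exists[OF odd_q] by blast
  have qv: "qchi v = -1" using v by (simp add: qchi_cases)
  have qone: "qchi (1::'a) = 1" using one_Sq by (simp add: qchi_cases)
  define Bp where "Bp = Some ` B"
  define Orb where "Orb = psl_orbit Bp"
  define NN where "NN = (\<lambda>T. card {Bl \<in> Orb. T \<subseteq> Bl})"
  define T1 where "T1 = {None, Some 0, Some (1::'a)}"
  define Tv where "Tv = {None, Some 0, Some v}"
  define cls where "cls = (\<lambda>e. {T :: 'a option set. card T = 3 \<and> invS T = e})"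
  define A where "A = (\<lambda>e. card {T. card T = 3 \<and> invS T = e \<and> T \<subseteq> Bp})"
  have N1: "NN T = NN T1" if "card T = 3" "invS T = 1" for T
    unfolding NN_def T1_def Orb_def using N_class[OF q1 that(1), of 1 Bp] that qone by simp
  have Nv: "NN T = NN Tv" if "card T = 3" "invS T = -1" for T
    unfolding NN_def Tv_def Orb_def using N_class[OF q1 that(1), of v Bp] that qv v by simp
  have dc: "(\<Sum>T\<in>cls e. NN T) = card Orb * A e" for e
  proof -
    have "(\<Sum>T\<in>cls e. NN T) = (\<Sum>Bl\<in>Orb. card {T \<in> cls e. T \<subseteq> Bl})"
      unfolding NN_def by (rule double_count) simp_all
    also have "\<dots> = (\<Sum>Bl\<in>Orb. A e)"
    proof (rule sum.cong)
      fix Bl assume "Bl \<in> Orb"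
      then obtain g where g: "g \<in> psl_maps" "Bl = g ` Bp" unfolding Orb_def psl_orbit_iff by blast
      have "{T \<in> cls e. T \<subseteq> Bl} = {T. card T = 3 \<and> invS T = e \<and> T \<subseteq> g ` Bp}"
        unfolding cls_def g(2) by blast
      then show "card {T \<in> cls e. T \<subseteq> Bl} = A e"
        unfolding A_def using block_count[OF q1 g(1), of e Bp] by simp
    qed simp
    finally show ?thesis by simp
  qed
  have s1: "(\<Sum>T\<in>cls 1. NN T) = card (cls 1) * NN T1"
  proof -
    have "(\<Sum>T\<in>cls 1. NN T) = (\<Sum>T\<in>cls 1. NN T1)"
      by (rule sum.cong) (auto simp: cls_def intro: N1)
    then show ?thesis by simp
  qed
  have sv: "(\<Sum>T\<in>cls (-1). NN T) = card (cls (-1)) * NN Tv"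
  proof -
    have "(\<Sum>T\<in>cls (-1). NN T) = (\<Sum>T\<in>cls (-1). NN Tv)"
      by (rule sum.cong) (auto simp: cls_def intro: Nv)
    then show ?thesis by simp
  qed
  have ccls: "card (cls 1) = card (cls (-1))"
  proof -
    define m where "m = lft v 0 0 1"
    have Dm: "v * 1 - 0 * 0 \<noteq> 0" using v by simp
    have injm: "inj m" unfolding m_def using lft_inj[OF Dm] .
    have cm: "card (m ` T) = card T" for T by (rule card_image[OF inj_on_subset[OF injm subset_UNIV]])
    have im: "invS (m ` T) = - invS T" if "card T = 3" for T
      using invS_img[OF q1 Dm that] qv unfolding m_def by simp
    have ijm: "inj_on ((`) m) X" for X by (rule inj_onI) (simp add: inj_image_eq_iff[OF injm])
    have "card (cls 1) \<le> card (cls (-1))"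
    proof (rule card_inj_on_le[OF ijm])
      show "(`) m ` cls 1 \<subseteq> cls (- 1)"
      proof
        fix X assume "X \<in> (`) m ` cls 1"
        then obtain T where "T \<in> cls 1" "X = m ` T" by blast
        then show "X \<in> cls (-1)" using cm im unfolding cls_def by simp
      qed
    qed simp
    moreover have "card (cls (-1)) \<le> card (cls 1)"
    proof (rule card_inj_on_le[OF ijm])
      show "(`) m ` cls (-1) \<subseteq> cls 1"
      proof
        fix X assume "X \<in> (`) m ` cls (-1)"
        then obtain T where "T \<in> cls (-1)" "X = m ` T" by blast
        then show "X \<in> cls 1" using cm im unfolding cls_def by simp
      qed
    qed simp
    ultimately show ?thesis by simp
  qed
  have cpos: "card (cls 1) > 0"
  proof -
    have "T1 \<in> cls 1" unfolding cls_def T1_def using invS_std[OF q1, of 1] qone by simp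
    then show ?thesis by (auto simp: card_gt_0_iff)
  qed
  have Opos: "card Orb > 0"
  proof -
    have "Bp \<in> Orb" unfolding Orb_def psl_orbit_iff using psl_id by (intro bexI[of _ id]) simp_all
    then show ?thesis by (auto simp: card_gt_0_iff)
  qed
  have E1: "card (cls 1) * NN T1 = card Orb * A 1" using dc[of 1] s1 by simp
  have Ev: "card (cls 1) * NN Tv = card Orb * A (-1)" using dc[of "-1"] sv ccls by simp
  define Th where "Th = {S. S \<subseteq> B \<and> card S = 3}"
  have tri_pm: "tri_chi S = 1 \<or> tri_chi S = -1" if "S \<in> Th" for S
  proof -
    have c: "card S = 3" using that unfolding Th_def by simp
    have "card (Some ` S) = 3" using c by (simp add: card_image)
    then show ?thesis using tri_chi_eq[OF q1 c] invS_pm[OF q1 \<open>card (Some ` S) = 3\<close>] by simp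
  qed
  have AA: "A e = card {S \<in> Th. tri_chi S = e}" for e
  proof -
    have "(`) Some ` {S \<in> Th. tri_chi S = e} = {T. card T = 3 \<and> invS T = e \<and> T \<subseteq> Bp}"
    proof (intro equalityI subsetI)
      fix X assume "X \<in> (`) Some ` {S \<in> Th. tri_chi S = e}"
      then obtain S where S: "S \<in> Th" "tri_chi S = e" "X = Some ` S" by blast
      have c: "card S = 3" using S unfolding Th_def by simp
      have "card X = 3" using S c by (simp add: card_image)
      moreover have "invS X = e" using S tri_chi_eq[OF q1 c] by simp
      moreover have "X \<subseteq> Bp" using S unfolding Th_def Bp_def by blast
      ultimately show "X \<in> {T. card T = 3 \<and> invS T = e \<and> T \<subseteq> Bp}" by blast
    next
      fix X assume X: "X \<in> {T. card T = 3 \<and> invS T = e \<and> T \<subseteq> Bp}"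
      then have "X \<subseteq> Some ` B" unfolding Bp_def by blast
      then obtain S where S: "S \<subseteq> B" "X = Some ` S" unfolding subset_image_iff by blast
      have c: "card S = 3" using X S by (simp add: card_image)
      have "tri_chi S = e" using X S tri_chi_eq[OF q1 c] by simp
      then show "X \<in> (`) Some ` {S \<in> Th. tri_chi S = e}" using S c unfolding Th_def by blast
    qed
    note im = this
    have ij: "inj_on ((`) Some) X" for X :: "'a set set"
      by (rule inj_onI) (simp add: inj_image_eq_iff)
    show ?thesis unfolding A_def im[symmetric] by (rule card_image[OF ij])
  qed
  have sum_eq: "(\<Sum>S\<in>Th. tri_chi S) = int (A 1) - int (A (-1))"
  proof -
    have "(\<Sum>S\<in>Th. tri_chi S) = (\<Sum>S\<in>Th. (if tri_chi S = 1 then 1 else 0) - (if tri_chi S = -1 then 1 else 0))"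
      by (rule sum.cong) (use tri_pm in auto)
    also have "\<dots> = (\<Sum>S\<in>Th. if tri_chi S = 1 then 1 else 0) - (\<Sum>S\<in>Th. if tri_chi S = -1 then 1 else 0)"
      by (rule sum_subtractf)
    also have "\<dots> = int (card {S \<in> Th. tri_chi S = 1}) - int (card {S \<in> Th. tri_chi S = -1})"
      using sum_if_card[of Th "\<lambda>S. tri_chi S = 1"] sum_if_card[of Th "\<lambda>S. tri_chi S = -1"]
      unfolding Th_def by simp
    finally show ?thesis unfolding AA .
  qed
  have Asum: "A 1 + A (-1) = card Th"
  proof -
    have "Th = {S \<in> Th. tri_chi S = 1} \<union> {S \<in> Th. tri_chi S = -1}" using tri_pm by blast
    moreover have "card ({S \<in> Th. tri_chi S = 1} \<union> {S \<in> Th. tri_chi S = -1}) =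
       card {S \<in> Th. tri_chi S = 1} + card {S \<in> Th. tri_chi S = -1}"
      by (rule card_Un_disjoint) auto
    ultimately show ?thesis unfolding AA by simp
  qed
  have Thpos: "card Th > 0"
  proof -
    obtain S where "S \<subseteq> B" "card S = 3" using obtain_subset_with_card_n[of 3 B] k_ge B_card by auto
    then have "S \<in> Th" unfolding Th_def by simp
    then show ?thesis by (auto simp: card_gt_0_iff)
  qed
  have blocks: "card Bl = k" if Bl: "Bl \<in> Orb" for Bl
  proof -
    obtain g where g: "g \<in> psl_maps" "Bl = g ` Bp" using Bl unfolding Orb_def psl_orbit_iff by blast
    have "card Bl = card Bp" using g psl_inj[OF g(1)] by (simp add: card_image inj_on_subset)
    also have "\<dots> = k" unfolding Bp_def using B_card by (simp add: card_image)
    finally show ?thesis .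
  qed
  have key: "NN T1 = NN Tv \<longleftrightarrow> A 1 = A (-1)"
  proof
    assume h: "NN T1 = NN Tv"
    have "card Orb * A 1 = card Orb * A (-1)" using E1 Ev h by metis
    then show "A 1 = A (-1)" using Opos by (metis mult_left_cancel not_gr0)
  next
    assume h: "A 1 = A (-1)"
    have "card (cls 1) * NN T1 = card (cls 1) * NN Tv" using E1 Ev h by metis
    then show "NN T1 = NN Tv" using cpos by (metis mult_left_cancel not_gr0)
  qed
  have G: "gives_3design B k \<longleftrightarrow> (\<exists>lam>0. \<forall>T. card T = 3 \<longrightarrow> NN T = lam)"
    unfolding gives_3design_def is_3design_def Bp_def[symmetric] Orb_def[symmetric] NN_def
    using blocks by auto
  show ?thesis
  proof
    assume "gives_3design B k"
    then obtain lam where "\<forall>T. card T = 3 \<longrightarrow> NN T = lam" using G by blast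
    moreover have "card T1 = 3" "card Tv = 3" unfolding T1_def Tv_def using v by simp_all
    ultimately have "NN T1 = NN Tv" by simp
    then have "A 1 = A (-1)" using key by simp
    then show "(\<Sum>S\<in>{S. S \<subseteq> B \<and> card S = 3}. tri_chi S) = 0" using sum_eq unfolding Th_def by simp
  next
    assume "(\<Sum>S\<in>{S. S \<subseteq> B \<and> card S = 3}. tri_chi S) = 0"
    then have eqA: "A 1 = A (-1)" using sum_eq unfolding Th_def by simp
    then have eqN: "NN T1 = NN Tv" using key by simp
    have "A 1 > 0" using eqA Asum Thpos by simp
    then have "card (cls 1) * NN T1 > 0" using E1 Opos by simp
    then have pos: "NN T1 > 0" by simp
    have "\<forall>T. card T = 3 \<longrightarrow> NN T = NN T1"
    proof (intro allI impI)
      fix T :: "'a option set" assume c: "card T = 3"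
      then show "NN T = NN T1" using invS_pm[OF q1 c] N1[OF c] Nv[OF c] eqN by auto
    qed
    then show "gives_3design B k" using G pos by blast
  qed
qed


end
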